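(* Let $n\ge 2$. Any quantum query algorithm that, for every permutation $\sigma$ of $\{0,1,\dots,n-1\}$, given oracle access to the comparison matrix $M_\sigma$, outputs $\sigma$ with probability $1$ (no error) must make at least $$\frac{1}{2\pi}\,n\ln n-\frac{1-C_E}{2\pi}\,n+O(1)\ \approx\ 0.110\,n\log_2 n-0.067\,n+O(1)$$ comparisons (oracle queries), where $C_E=0.57721566\ldots$ is the Euler–Mascheroni constant.
   Context: Sorting $n$ numbers by comparisons is modeled as follows. The numbers are given by a permutation $\sigma$ of $\{0,\dots,n-1\}$, and the input is the comparison matrix $M_\sigma\in\{0,1\}^{n\times n}$ with $(M_\sigma)_{i,j}=1$ if $\sigma(i)\le\sigma(j)$ and $0$ otherwise. A quantum query algorithm works in the Hilbert space spanned by orthonormal vectors $|i,j,b,c\rangle$ with $0\le i,j\le n-1$, $b\in\{0,1\}$, $c\in\{0,1\}^w$ for some fixed $w\ge 0$. The oracle gate for input $\sigma$ is the unitary $O_\sigma|i,j,b,c\rangle=|i,j,b\oplus(M_\sigma)_{i,j},c\rangle$. An algorithm making $T$ queries applies fixed unitaries $U_0,\dots,U_T$ (independent of $\sigma$) interleaved with $O_\sigma$, producing $U_TO_\sigma\cdots U_1O_\sigma U_0|\vec 0\rangle$, and then a fixed measurement whose outcome is its output. The number of comparisons is $T$. *)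

theory Defs
  imports "HOL-Analysis.Analysis" "HOL-Combinatorics.Permutations"
begin

text \<open>Basis labels |i,j,b,c> are tuples (i,j,b,c); the workspace register c in {0,1}^w
  is encoded as a natural number c < 2^w.  Vectors are functions label => complex,
  supported on the finite basis set; operators are matrices label => label => complex.\<close>

type_synonym label = "nat \<times> nat \<times> bool \<times> nat"
type_synonym qvec = "label \<Rightarrow> complex"
type_synonym qop = "label \<Rightarrow> label \<Rightarrow> complex"

definition basis_set :: "nat \<Rightarrow> nat \<Rightarrow> label set" where
  "basis_set n w = {(i,j,b,c). i < n \<and> j < n \<and> c < 2^w}"

definition cmp_matrix :: "(nat \<Rightarrow> nat) \<Rightarrow> nat \<Rightarrow> nat \<Rightarrow> bool" where
  "cmp_matrix \<sigma> i j = (\<sigma> i \<le> \<sigma> j)"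

definition apply_op :: "nat \<Rightarrow> nat \<Rightarrow> qop \<Rightarrow> qvec \<Rightarrow> qvec" where
  "apply_op n w U v = (\<lambda>x. if x \<in> basis_set n w then (\<Sum>y\<in>basis_set n w. U x y * v y) else 0)"

definition qinner :: "nat \<Rightarrow> nat \<Rightarrow> qvec \<Rightarrow> qvec \<Rightarrow> complex" where
  "qinner n w v u = (\<Sum>x\<in>basis_set n w. cnj (v x) * u x)"

definition query_gate :: "(nat \<Rightarrow> nat) \<Rightarrow> qvec \<Rightarrow> qvec" where
  "query_gate \<sigma> v = (\<lambda>(i,j,b,c). v (i, j, b \<noteq> cmp_matrix \<sigma> i j, c))"

definition is_unitary :: "nat \<Rightarrow> nat \<Rightarrow> qop \<Rightarrow> bool" where
  "is_unitary n w U \<longleftrightarrow>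
     (\<forall>x\<in>basis_set n w. \<forall>y\<in>basis_set n w.
        (\<Sum>k\<in>basis_set n w. cnj (U k x) * U k y) = (if x = y then 1 else 0))"

definition init_state :: qvec where
  "init_state = (\<lambda>x. if x = (0, 0, False, 0) then 1 else 0)"

fun run_state :: "nat \<Rightarrow> nat \<Rightarrow> (nat \<Rightarrow> qop) \<Rightarrow> (nat \<Rightarrow> nat) \<Rightarrow> nat \<Rightarrow> qvec" where
  "run_state n w U \<sigma> 0 = apply_op n w (U 0) init_state"
| "run_state n w U \<sigma> (Suc k) = apply_op n w (U (Suc k)) (query_gate \<sigma> (run_state n w U \<sigma> k))"

definition is_povm :: "nat \<Rightarrow> nat \<Rightarrow> (nat \<Rightarrow> nat) set \<Rightarrow> ((nat \<Rightarrow> nat) \<Rightarrow> qop) \<Rightarrow> bool" where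
  "is_povm n w Out E \<longleftrightarrow> finite Out \<and>
     (\<forall>r\<in>Out. \<forall>v. Im (qinner n w v (apply_op n w (E r) v)) = 0
                   \<and> Re (qinner n w v (apply_op n w (E r) v)) \<ge> 0) \<and>
     (\<forall>x\<in>basis_set n w. \<forall>y\<in>basis_set n w.
        (\<Sum>r\<in>Out. E r x y) = (if x = y then 1 else 0))"

definition out_prob :: "nat \<Rightarrow> nat \<Rightarrow> nat \<Rightarrow> (nat \<Rightarrow> qop) \<Rightarrow> (nat \<Rightarrow> nat) set
    \<Rightarrow> ((nat \<Rightarrow> nat) \<Rightarrow> qop) \<Rightarrow> (nat \<Rightarrow> nat) \<Rightarrow> (nat \<Rightarrow> nat) \<Rightarrow> real" where
  "out_prob n w T U Out E \<sigma> r =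
     (if r \<in> Out then
        Re (qinner n w (run_state n w U \<sigma> T) (apply_op n w (E r) (run_state n w U \<sigma> T)))
      else 0)"

definition exact_sorting_alg :: "nat \<Rightarrow> nat \<Rightarrow> nat \<Rightarrow> (nat \<Rightarrow> qop) \<Rightarrow> (nat \<Rightarrow> nat) set
    \<Rightarrow> ((nat \<Rightarrow> nat) \<Rightarrow> qop) \<Rightarrow> bool" where
  "exact_sorting_alg n w T U Out E \<longleftrightarrow>
     (\<forall>k\<le>T. is_unitary n w (U k)) \<and> is_povm n w Out E \<and>
     (\<forall>\<sigma>. \<sigma> permutes {..<n} \<longrightarrow> out_prob n w T U Out E \<sigma> \<sigma> = 1)"

end

theory Submission
  imports Defs
begin


lemma basis_prod: "basis_set n w = {..<n} \<times> {..<n} \<times> (UNIV::bool set) \<times> {..<(2::nat)^w}"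
  unfolding basis_set_def by auto

lemma finite_basis[simp]: "finite (basis_set n w)"
  unfolding basis_prod by auto

definition blk :: "qvec \<Rightarrow> qvec \<Rightarrow> nat \<Rightarrow> nat \<Rightarrow> nat \<Rightarrow> complex" where
  "blk v u i j c = cnj (v (i,j,True,c)) * u (i,j,True,c) + cnj (v (i,j,False,c)) * u (i,j,False,c)"

lemma qinner_blocks: "qinner n w v u = (\<Sum>i<n. \<Sum>j<n. \<Sum>c<(2::nat)^w. blk v u i j c)"
proof -
  have "qinner n w v u = (\<Sum>i<n. \<Sum>j<n. \<Sum>b\<in>(UNIV::bool set). \<Sum>c<(2::nat)^w. cnj (v (i,j,b,c)) * u (i,j,b,c))"
    unfolding qinner_def basis_prod by (simp add: sum.cartesian_product)
  also have "\<dots> = (\<Sum>i<n. \<Sum>j<n. \<Sum>c<(2::nat)^w. blk v u i j c)"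
    unfolding blk_def UNIV_bool by (simp add: sum.distrib add.commute)
  finally show ?thesis .
qed

lemma qinner_unitary:
  assumes "is_unitary n w U"
  shows "qinner n w (apply_op n w U v) (apply_op n w U u) = qinner n w v u"
proof -
  let ?B = "basis_set n w"
  have "qinner n w (apply_op n w U v) (apply_op n w U u)
      = (\<Sum>x\<in>?B. cnj (\<Sum>y\<in>?B. U x y * v y) * (\<Sum>z\<in>?B. U x z * u z))"
    unfolding qinner_def apply_op_def by simp
  also have "\<dots> = (\<Sum>x\<in>?B. \<Sum>y\<in>?B. \<Sum>z\<in>?B. cnj (v y) * u z * (cnj (U x y) * U x z))"
    by (simp add: sum_distrib_left sum_distrib_right mult_ac)
  also have "\<dots> = (\<Sum>y\<in>?B. \<Sum>z\<in>?B. cnj (v y) * u z * (\<Sum>x\<in>?B. cnj (U x y) * U x z))"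
  proof -
    have "(\<Sum>x\<in>?B. \<Sum>y\<in>?B. \<Sum>z\<in>?B. cnj (v y) * u z * (cnj (U x y) * U x z))
        = (\<Sum>y\<in>?B. \<Sum>x\<in>?B. \<Sum>z\<in>?B. cnj (v y) * u z * (cnj (U x y) * U x z))"
      by (rule sum.swap)
    also have "\<dots> = (\<Sum>y\<in>?B. \<Sum>z\<in>?B. \<Sum>x\<in>?B. cnj (v y) * u z * (cnj (U x y) * U x z))"
      by (rule sum.cong[OF refl], rule sum.swap)
    finally show ?thesis by (simp add: sum_distrib_left)
  qed
  also have "\<dots> = (\<Sum>y\<in>?B. \<Sum>z\<in>?B. cnj (v y) * u z * (if y = z then 1 else 0))"
    using assms unfolding is_unitary_def by simp
  also have "\<dots> = qinner n w v u"
    unfolding qinner_def by (simp add: if_distrib cong: if_cong)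
  finally show ?thesis .
qed

lemma qinner_query:
  "qinner n w (query_gate \<sigma> v) (query_gate \<tau> u) =
    (\<Sum>i<n. \<Sum>j<n. \<Sum>c<(2::nat)^w.
      (if cmp_matrix \<sigma> i j = cmp_matrix \<tau> i j then blk v u i j c
       else cnj (v (i,j,True,c)) * u (i,j,False,c) + cnj (v (i,j,False,c)) * u (i,j,True,c)))"
  unfolding qinner_blocks
  by (intro sum.cong refl) (auto simp: blk_def query_gate_def add.commute)

lemma qinner_query_same: "qinner n w (query_gate \<sigma> v) (query_gate \<sigma> u) = qinner n w v u"
  unfolding qinner_query by (simp add: qinner_blocks)


abbreviation Qf where "Qf n w E v \<equiv> qinner n w v (apply_op n w E v)"

lemma apply_op_lin: "apply_op n w E (\<lambda>x. u x + t * v x) = (\<lambda>x. apply_op n w E u x + t * apply_op n w E v x)"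
  unfolding apply_op_def by (auto simp: sum.distrib sum_distrib_left algebra_simps)

lemma qinner_lin2: "qinner n w a (\<lambda>x. u x + t * v x) = qinner n w a u + t * qinner n w a v"
  unfolding qinner_def by (auto simp: sum.distrib sum_distrib_left algebra_simps)

lemma qinner_lin1: "qinner n w (\<lambda>x. u x + t * v x) a = qinner n w u a + cnj t * qinner n w v a"
  unfolding qinner_def by (auto simp: sum.distrib sum_distrib_left algebra_simps)

lemma Q_expand: "Qf n w E (\<lambda>x. u x + t * v x) =
   Qf n w E u + t * qinner n w u (apply_op n w E v) + cnj t * qinner n w v (apply_op n w E u)
   + (cnj t * t) * Qf n w E v"
  unfolding apply_op_lin qinner_lin1 qinner_lin2 by (simp add: algebra_simps)


lemma quad_zero:
  fixes c q :: real
  assumes "q \<ge> 0" "\<And>r. r * c + r^2 * q \<ge> 0"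
  shows "c = 0"
proof (rule ccontr)
  assume "c \<noteq> 0"
  define e where "e = 1 / (q + 1)"
  have e0: "e > 0" using assms(1) unfolding e_def by simp
  have "e * (q + 1) = 1" using assms(1) unfolding e_def by simp
  hence eq: "e * q < 1" using e0 by (simp add: algebra_simps)
  have "(- c * e) * c + (- c * e)^2 * q = (c^2 * e) * (e * q - 1)"
    by (simp add: power2_eq_square algebra_simps)
  moreover have "(c^2 * e) * (e * q - 1) < 0"
    using \<open>c \<noteq> 0\<close> e0 eq by (intro mult_pos_neg) auto
  ultimately show False using assms(2)[of "- c * e"] by linarith
qed
definition psd where "psd n w E \<longleftrightarrow> (\<forall>v. Im (Qf n w E v) = 0 \<and> Re (Qf n w E v) \<ge> 0)"

lemma psdD: "psd n w E \<Longrightarrow> Im (Qf n w E v) = 0" "psd n w E \<Longrightarrow> Re (Qf n w E v) \<ge> 0"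
  unfolding psd_def by auto

lemma psd_herm:
  assumes "psd n w E"
  shows "qinner n w u (apply_op n w E v) = cnj (qinner n w v (apply_op n w E u))"
proof -
  define a where "a = qinner n w u (apply_op n w E v)"
  define b where "b = qinner n w v (apply_op n w E u)"
  define qu where "qu = Qf n w E u"
  define qv where "qv = Qf n w E v"
  have e1: "Qf n w E (\<lambda>x. u x + 1 * v x) = qu + a + b + qv"
    unfolding Q_expand a_def b_def qu_def qv_def by simp
  have e2: "Qf n w E (\<lambda>x. u x + \<i> * v x) = qu + \<i> * a - \<i> * b + qv"
    unfolding Q_expand a_def b_def qu_def qv_def by simp
  have i1: "Im qu = 0" "Im qv = 0" using psdD(1)[OF assms] unfolding qu_def qv_def by auto
  have "Im (qu + a + b + qv) = 0" using psdD(1)[OF assms, of "\<lambda>x. u x + 1 * v x"] e1 by simp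
  hence "Im a + Im b = 0" using i1 by simp
  moreover have "Im (qu + \<i> * a - \<i> * b + qv) = 0" using psdD(1)[OF assms, of "\<lambda>x. u x + \<i> * v x"] e2 by simp
  hence "Re a - Re b = 0" using i1 by simp
  ultimately show ?thesis unfolding a_def[symmetric] b_def[symmetric] by (simp add: complex_eq_iff)
qed

lemma psd_zero:
  assumes "psd n w E" "Qf n w E v = 0"
  shows "qinner n w u (apply_op n w E v) = 0"
proof -
  define a where "a = qinner n w v (apply_op n w E u)"
  define b where "b = qinner n w u (apply_op n w E v)"
  define qu where "qu = Qf n w E u"
  have q: "Re qu \<ge> 0" "Im qu = 0" using psdD[OF assms(1)] unfolding qu_def by auto
  have h: "a = cnj b" unfolding a_def b_def by (rule psd_herm[OF assms(1)])
  have "Re (a + b) = 0"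
  proof (rule quad_zero[OF q(1)])
    fix r :: real
    have e: "Qf n w E (\<lambda>x. v x + complex_of_real r * u x) = of_real r * a + of_real r * b + (of_real r * of_real r) * qu"
      unfolding Q_expand a_def b_def qu_def assms(2) by simp
    have "Re (Qf n w E (\<lambda>x. v x + complex_of_real r * u x)) \<ge> 0" by (rule psdD(2)[OF assms(1)])
    then show "r * Re (a + b) + r^2 * Re qu \<ge> 0" unfolding e by (simp add: power2_eq_square distrib_left)
  qed
  moreover have "Re (\<i> * a - \<i> * b) = 0"
  proof (rule quad_zero[OF q(1)])
    fix r :: real
    have e: "Qf n w E (\<lambda>x. v x + (\<i> * complex_of_real r) * u x) = (\<i> * of_real r) * a + cnj (\<i> * of_real r) * b + (cnj (\<i> * of_real r) * (\<i> * of_real r)) * qu"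
      unfolding Q_expand a_def b_def qu_def assms(2) by simp
    have c1: "cnj (\<i> * complex_of_real r) = - (\<i> * of_real r)" by simp
    have c3: "\<i> * complex_of_real r * (\<i> * complex_of_real r) = (\<i> * \<i>) * (of_real r * of_real r)"
      by (simp only: mult_ac)
    have c2: "cnj (\<i> * complex_of_real r) * (\<i> * of_real r) = of_real (r * r)"
      unfolding c1 by (simp only: minus_mult_left[symmetric] c3) simp
    have "Re (Qf n w E (\<lambda>x. v x + (\<i> * complex_of_real r) * u x)) \<ge> 0" by (rule psdD(2)[OF assms(1)])
    then show "r * Re (\<i> * a - \<i> * b) + r^2 * Re qu \<ge> 0" unfolding e c1 c2 using q(2)
      by (simp add: power2_eq_square right_diff_distrib)
  qed
  ultimately show ?thesis unfolding b_def[symmetric] using h by (simp add: complex_eq_iff)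
qed


lemma povm_psd: "is_povm n w Out E \<Longrightarrow> r \<in> Out \<Longrightarrow> psd n w (E r)"
  unfolding is_povm_def psd_def by blast

lemma povm_sum:
  assumes "is_povm n w Out E"
  shows "(\<Sum>r\<in>Out. qinner n w u (apply_op n w (E r) v)) = qinner n w u v"
proof -
  let ?B = "basis_set n w"
  have fin: "finite Out" using assms unfolding is_povm_def by blast
  have id: "\<And>x y. x \<in> ?B \<Longrightarrow> y \<in> ?B \<Longrightarrow> (\<Sum>r\<in>Out. E r x y) = (if x = y then 1 else 0)"
    using assms unfolding is_povm_def by blast
  have "(\<Sum>r\<in>Out. qinner n w u (apply_op n w (E r) v))
      = (\<Sum>r\<in>Out. \<Sum>x\<in>?B. \<Sum>y\<in>?B. cnj (u x) * (E r x y * v y))"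
    unfolding qinner_def apply_op_def by (simp add: sum_distrib_left)
  also have "\<dots> = (\<Sum>x\<in>?B. \<Sum>y\<in>?B. \<Sum>r\<in>Out. cnj (u x) * (E r x y * v y))"
  proof -
    have "(\<Sum>r\<in>Out. \<Sum>x\<in>?B. \<Sum>y\<in>?B. cnj (u x) * (E r x y * v y))
        = (\<Sum>x\<in>?B. \<Sum>r\<in>Out. \<Sum>y\<in>?B. cnj (u x) * (E r x y * v y))" by (rule sum.swap)
    also have "\<dots> = (\<Sum>x\<in>?B. \<Sum>y\<in>?B. \<Sum>r\<in>Out. cnj (u x) * (E r x y * v y))"
      by (rule sum.cong[OF refl], rule sum.swap)
    finally show ?thesis .
  qed
  also have "\<dots> = (\<Sum>x\<in>?B. \<Sum>y\<in>?B. cnj (u x) * ((\<Sum>r\<in>Out. E r x y) * v y))"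
    by (simp add: sum_distrib_left sum_distrib_right)
  also have "\<dots> = (\<Sum>x\<in>?B. \<Sum>y\<in>?B. cnj (u x) * ((if x = y then 1 else 0) * v y))"
    by (intro sum.cong refl) (simp add: id)
  also have "\<dots> = (\<Sum>x\<in>?B. \<Sum>y\<in>?B. if x = y then cnj (u x) * v x else 0)"
    by (intro sum.cong refl) auto
  also have "\<dots> = qinner n w u v" unfolding qinner_def by simp
  finally show ?thesis .
qed


lemma povm_kill:
  assumes P: "is_povm n w Out E" and s: "s \<in> Out" and nrm: "qinner n w \<psi> \<psi> = 1"
    and one: "Re (Qf n w (E s) \<psi>) = 1" and r: "r \<in> Out" "r \<noteq> s"
  shows "Qf n w (E r) \<psi> = 0"
proof -
  have fin: "finite Out" using P unfolding is_povm_def by blast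
  have S: "(\<Sum>r\<in>Out. Qf n w (E r) \<psi>) = 1" using povm_sum[OF P, of \<psi> \<psi>] nrm by (simp only:)
  have "(\<Sum>r\<in>Out. Re (Qf n w (E r) \<psi>)) = Re (\<Sum>r\<in>Out. Qf n w (E r) \<psi>)" by (simp only: Re_sum)
  also have "\<dots> = 1" unfolding S by simp
  also have "(\<Sum>r\<in>Out. Re (Qf n w (E r) \<psi>)) = Re (Qf n w (E s) \<psi>) + (\<Sum>r\<in>Out-{s}. Re (Qf n w (E r) \<psi>))"
    by (rule sum.remove[OF fin s])
  finally have z: "(\<Sum>r\<in>Out-{s}. Re (Qf n w (E r) \<psi>)) = 0" using one by linarith
  have nn: "\<And>r. r \<in> Out-{s} \<Longrightarrow> Re (Qf n w (E r) \<psi>) \<ge> 0"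
    using psdD(2)[OF povm_psd[OF P]] by blast
  have "\<forall>r\<in>Out-{s}. Re (Qf n w (E r) \<psi>) = 0"
    using z sum_nonneg_eq_0_iff[of "Out-{s}", OF _ nn] fin by simp
  hence "Re (Qf n w (E r) \<psi>) = 0" using r by blast
  moreover have "Im (Qf n w (E r) \<psi>) = 0" using psdD(1)[OF povm_psd[OF P r(1)]] .
  ultimately show ?thesis by (simp add: complex_eq_iff)
qed

lemma povm_orth:
  assumes P: "is_povm n w Out E" and s: "s \<in> Out" and t: "t \<in> Out" and st: "s \<noteq> t"
    and n1: "qinner n w \<psi> \<psi> = 1" and o1: "Re (Qf n w (E s) \<psi>) = 1"
    and n2: "qinner n w \<phi> \<phi> = 1" and o2: "Re (Qf n w (E t) \<phi>) = 1"
  shows "qinner n w \<phi> \<psi> = 0"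
proof -
  have fin: "finite Out" using P unfolding is_povm_def by blast
  have "qinner n w \<phi> \<psi> = (\<Sum>r\<in>Out. qinner n w \<phi> (apply_op n w (E r) \<psi>))"
    using povm_sum[OF P] by (simp only:)
  also have "\<dots> = qinner n w \<phi> (apply_op n w (E s) \<psi>) + (\<Sum>r\<in>Out-{s}. qinner n w \<phi> (apply_op n w (E r) \<psi>))"
    by (rule sum.remove[OF fin s])
  also have "(\<Sum>r\<in>Out-{s}. qinner n w \<phi> (apply_op n w (E r) \<psi>)) = 0"
  proof (rule sum.neutral, rule ballI)
    fix r assume r: "r \<in> Out - {s}"
    show "qinner n w \<phi> (apply_op n w (E r) \<psi>) = 0"
      using r psd_zero[OF povm_psd[OF P] povm_kill[OF P s n1 o1]] by blast
  qed
  also have "qinner n w \<phi> (apply_op n w (E s) \<psi>) = cnj (qinner n w \<psi> (apply_op n w (E s) \<phi>))"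
    by (rule psd_herm[OF povm_psd[OF P s]])
  also have "qinner n w \<psi> (apply_op n w (E s) \<phi>) = 0"
    using psd_zero[OF povm_psd[OF P s] povm_kill[OF P t n2 o2 s st]] .
  finally show ?thesis by simp
qed


definition hf :: "real \<Rightarrow> real \<Rightarrow> real" where "hf s t = sqrt s / ((s + t) * sqrt t)"
definition hF :: "real \<Rightarrow> real \<Rightarrow> real" where "hF s t = 2 * arctan (sqrt t / sqrt s)"

lemma alg: fixes a b :: real assumes a: "a > 0" and b: "b > 0"
  shows "2 * (inverse (1 + (b / a)\<^sup>2) * (inverse b / 2 / a)) = a / ((a\<^sup>2 + b\<^sup>2) * b)"
proof -
  have p: "a\<^sup>2 + b\<^sup>2 > 0" using a b by (simp add: add_pos_pos)
  have 1: "1 + (b / a)\<^sup>2 = (a\<^sup>2 + b\<^sup>2) / a\<^sup>2" using a by (simp add: power_divide add_divide_distrib)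
  have 2: "inverse b / 2 / a = 1 / (2 * a * b)" by (simp add: field_simps)
  have 3: "2 * (a\<^sup>2 / (a\<^sup>2 + b\<^sup>2) * (1 / (2 * a * b))) = (2 * a\<^sup>2) / ((a\<^sup>2 + b\<^sup>2) * (2 * a * b))"
    by simp
  have 4: "(2 * a\<^sup>2) / ((a\<^sup>2 + b\<^sup>2) * (2 * a * b)) = a / ((a\<^sup>2 + b\<^sup>2) * b)"
  proof (subst frac_eq_eq)
    show "(a\<^sup>2 + b\<^sup>2) * (2 * a * b) \<noteq> 0" using a b p by simp
    show "(a\<^sup>2 + b\<^sup>2) * b \<noteq> 0" using b p by simp
    show "2 * a\<^sup>2 * ((a\<^sup>2 + b\<^sup>2) * b) = a * ((a\<^sup>2 + b\<^sup>2) * (2 * a * b))"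
      by (simp add: power2_eq_square mult_ac)
  qed
  show ?thesis unfolding 1 2 inverse_divide 3 4 ..
qed

lemma hF_deriv:
  assumes s: "s > 0" and t: "t > 0"
  shows "(hF s has_real_derivative hf s t) (at t)"
proof -
  have d1: "(sqrt has_real_derivative inverse (sqrt t)/2) (at t)" by (rule DERIV_real_sqrt[OF t])
  have d2: "((\<lambda>t. sqrt t / sqrt s) has_real_derivative inverse (sqrt t)/2 / sqrt s) (at t)"
    by (rule DERIV_cdivide[OF d1])
  have d3: "((\<lambda>t. arctan (sqrt t / sqrt s)) has_real_derivative inverse (1 + (sqrt t/sqrt s)\<^sup>2) * (inverse(sqrt t)/2/sqrt s)) (at t)"
    by (rule DERIV_chain2[OF DERIV_arctan d2])
  have d4: "((\<lambda>t. 2 * arctan (sqrt t / sqrt s)) has_real_derivative 2 * (inverse (1 + (sqrt t/sqrt s)\<^sup>2) * (inverse(sqrt t)/2/sqrt s))) (at t)"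
    by (rule DERIV_cmult[OF d3])
  have e: "2 * (inverse (1 + (sqrt t/sqrt s)\<^sup>2) * (inverse(sqrt t)/2/sqrt s)) = sqrt s / (((sqrt s)\<^sup>2 + (sqrt t)\<^sup>2) * sqrt t)"
    by (rule alg) (use s t in auto)
  have e2: "sqrt s / (((sqrt s)\<^sup>2 + (sqrt t)\<^sup>2) * sqrt t) = hf s t" unfolding hf_def using s t by simp
  show ?thesis using d4 unfolding e e2 hF_def[abs_def] .
qed

lemma hF_cont: "s > 0 \<Longrightarrow> continuous_on A (hF s)"
  unfolding hF_def[abs_def] by (intro continuous_intros) auto

lemma inv_sqrt_convex:
  fixes c x :: real
  assumes "0 \<le> x" "x < c"
  shows "1 / sqrt (c + x) + 1 / sqrt (c - x) \<ge> 2 / sqrt c"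
proof -
  have c: "c > 0" using assms by simp
  have cx: "c - x > 0" "c + x > 0" using assms by auto
  have e1: "(1 / sqrt (c + x) + 1 / sqrt (c - x))\<^sup>2 = 1/(c+x) + 1/(c-x) + 2 / sqrt ((c+x)*(c-x))"
  proof -
    have "(1 / sqrt (c + x) + 1 / sqrt (c - x))\<^sup>2 = (1 / sqrt (c + x))\<^sup>2 + (1 / sqrt (c - x))\<^sup>2 + 2 * (1 / sqrt (c + x)) * (1 / sqrt (c - x))"
      by (rule power2_sum)
    also have "(1 / sqrt (c + x))\<^sup>2 = 1 / (c + x)" using cx by (simp add: power_divide)
    also have "(1 / sqrt (c - x))\<^sup>2 = 1 / (c - x)" using cx by (simp add: power_divide)
    also have "2 * (1 / sqrt (c + x)) * (1 / sqrt (c - x)) = 2 / sqrt ((c+x)*(c-x))" by (simp add: real_sqrt_mult)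
    finally show ?thesis .
  qed
  have e2: "(2 / sqrt c)\<^sup>2 = 4 / c" using c by (simp add: power2_eq_square field_simps)
  have a1: "1/(c+x) + 1/(c-x) \<ge> 2 / c"
  proof -
    have "1/(c+x) + 1/(c-x) = 2 * c / ((c+x)*(c-x))" using cx by (simp add: field_simps)
    also have "(c+x)*(c-x) \<le> c * c" by (simp add: algebra_simps)
    hence "2 * c / ((c+x)*(c-x)) \<ge> 2 * c / (c * c)" using cx c
      by (intro divide_left_mono) auto
    finally show ?thesis using c by (simp add: field_simps)
  qed
  have a2: "2 / sqrt ((c+x)*(c-x)) \<ge> 2 / c"
  proof -
    have "sqrt ((c+x)*(c-x)) \<le> sqrt (c * c)" by (intro real_sqrt_le_mono) (simp add: algebra_simps)
    hence "sqrt ((c+x)*(c-x)) \<le> c" using c by simp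
    moreover have "sqrt ((c+x)*(c-x)) > 0" using cx by simp
    ultimately show ?thesis using c by (intro divide_left_mono) auto
  qed
  have "(2 / sqrt c)\<^sup>2 \<le> (1 / sqrt (c + x) + 1 / sqrt (c - x))\<^sup>2"
    unfolding e1 e2 using a1 a2 by linarith
  then show ?thesis by (rule power2_le_imp_le) (use cx in simp)
qed

lemma hf_convex:
  fixes s c x :: real
  assumes s: "s > 0" and x: "0 \<le> x" "x < c"
  shows "hf s (c + x) + hf s (c - x) \<ge> 2 * hf s c"
proof -
  define up where "up = 1 / (s + (c + x))"
  define um where "um = 1 / (s + (c - x))"
  define vp where "vp = 1 / sqrt (c + x)"
  define vm where "vm = 1 / sqrt (c - x)"
  have c: "c > 0" using x by simp
  have cx: "c - x > 0" "c + x > 0" using x by auto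
  have pos: "up > 0" "um > 0" "vp > 0" "vm > 0" unfolding up_def um_def vp_def vm_def using cx s by auto
  have "up \<le> um" unfolding up_def um_def using cx s x by (intro divide_left_mono) auto
  moreover have "vp \<le> vm" unfolding vp_def vm_def using cx x by (intro divide_left_mono) auto
  ultimately have cheb: "(um - up) * (vm - vp) \<ge> 0" by simp
  have u2: "up + um \<ge> 2 / (s + c)"
  proof -
    have "up + um = 2 * (s + c) / ((s + c + x) * (s + c - x))" unfolding up_def um_def
      using cx s by (simp add: field_simps)
    also have "(s + c + x) * (s + c - x) \<le> (s + c) * (s + c)" by (simp add: algebra_simps)
    hence "2 * (s + c) / ((s + c + x) * (s + c - x)) \<ge> 2 * (s + c) / ((s + c) * (s + c))"
      using cx s by (intro divide_left_mono) auto
    also have "2 * (s + c) / ((s + c) * (s + c)) = 2 / (s + c)"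
      by (rule nonzero_mult_divide_mult_cancel_right) (use s c in simp)
    finally show ?thesis .
  qed
  have v2: "vp + vm \<ge> 2 / sqrt c" unfolding vp_def vm_def by (rule inv_sqrt_convex[OF x])
  have "(up + um) * (vp + vm) \<ge> (2 / (s + c)) * (2 / sqrt c)"
    using u2 v2 pos s c by (intro mult_mono) auto
  hence "2 * (up * vp + um * vm) \<ge> 4 * (1 / ((s + c) * sqrt c))"
    using cheb by (simp add: algebra_simps)
  hence "up * vp + um * vm \<ge> 2 * (1 / ((s + c) * sqrt c))" by simp
  hence "sqrt s * (up * vp + um * vm) \<ge> sqrt s * (2 * (1 / ((s + c) * sqrt c)))"
    using s by (intro mult_left_mono) auto
  moreover have "hf s (c + x) = sqrt s * (up * vp)" "hf s (c - x) = sqrt s * (um * vm)"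
    "hf s c = sqrt s * (1 / ((s + c) * sqrt c))"
    unfolding hf_def up_def vp_def um_def vm_def by (simp_all add: add.assoc)
  ultimately show ?thesis by (simp add: algebra_simps)
qed


lemma hf_step:
  assumes s: "s > 0" and c: "c \<ge> 1/2"
  shows "hf s c \<le> hF s (c + 1/2) - hF s (c - 1/2)"
proof -
  define g where "g x = hF s (c + x) - hF s (c - x) - 2 * x * hf s c" for x
  have geq: "g = (\<lambda>x. hF s (c + x) - hF s (c - x) - 2 * x * hf s c)" unfolding g_def by (rule refl)
  have deriv: "\<exists>y. (g has_real_derivative y) (at x) \<and> y \<ge> 0" if x: "0 < x" "x < 1/2" for x
  proof -
    have cx: "c + x > 0" "c - x > 0" using x c by auto
    have d1: "((\<lambda>x. c + x) has_real_derivative 1) (at x)" by (auto intro!: derivative_eq_intros)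
    have d2: "((\<lambda>x. c - x) has_real_derivative -1) (at x)" by (auto intro!: derivative_eq_intros)
    have A: "((\<lambda>x. hF s (c + x)) has_real_derivative hf s (c + x) * 1) (at x)"
      by (rule DERIV_chain2[OF hF_deriv[OF s cx(1)] d1])
    have B: "((\<lambda>x. hF s (c - x)) has_real_derivative hf s (c - x) * -1) (at x)"
      by (rule DERIV_chain2[OF hF_deriv[OF s cx(2)] d2])
    have C: "((\<lambda>x. 2 * x * hf s c) has_real_derivative 2 * hf s c) (at x)"
      by (auto intro!: derivative_eq_intros)
    have D: "(g has_real_derivative (hf s (c + x) * 1 - hf s (c - x) * -1 - 2 * hf s c)) (at x)"
      using DERIV_diff[OF DERIV_diff[OF A B] C] unfolding geq .
    have "hf s (c + x) + hf s (c - x) \<ge> 2 * hf s c" using hf_convex[OF s, of x c] x c by simp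
    then show ?thesis using D by (intro exI[of _ "hf s (c + x) * 1 - hf s (c - x) * -1 - 2 * hf s c"]) auto
  qed
  have cont: "continuous_on {0..1/2} g" unfolding geq hF_def using s by (intro continuous_intros) auto
  have "g 0 \<le> g (1/2)" by (rule DERIV_nonneg_imp_increasing_open[OF _ deriv cont]) auto
  then show ?thesis unfolding g_def by simp
qed

lemma hF_0[simp]: "hF s 0 = 0" unfolding hF_def by simp

lemma hF_le_pi: "hF s t \<le> pi"
  unfolding hF_def using arctan_ubound[of "sqrt t / sqrt s"] by simp

lemma hilbert_sum:
  assumes s: "s > 0"
  shows "(\<Sum>k\<in>{1..m}. hf s (real k - 1/2)) \<le> pi"
proof -
  have "(\<Sum>k\<in>{1..m}. hf s (real k - 1/2)) \<le> hF s (real m)"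
  proof (induction m)
    case 0 then show ?case by simp
  next
    case (Suc m)
    have "hf s (real (Suc m) - 1/2) \<le> hF s (real (Suc m) - 1/2 + 1/2) - hF s (real (Suc m) - 1/2 - 1/2)"
      by (rule hf_step[OF s]) simp
    also have "real (Suc m) - 1/2 + 1/2 = real (Suc m)" by simp
    also have "real (Suc m) - 1/2 - 1/2 = real m" by simp
    finally show ?case using Suc by simp
  qed
  also have "\<dots> \<le> pi" by (rule hF_le_pi)
  finally show ?thesis .
qed


definition mv :: "nat \<Rightarrow> nat \<Rightarrow> nat \<Rightarrow> nat" where
  "mv a b v = (if v = a then b else if a < b \<and> a < v \<and> v \<le> b then v - 1
     else if b < a \<and> b \<le> v \<and> v < a then v + 1 else v)"

lemma mv_inv[simp]: "mv b a (mv a b v) = v"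
  unfolding mv_def by auto

lemma mv_at[simp]: "mv a b a = b" unfolding mv_def by simp

lemma mv_out: "a < n \<Longrightarrow> b < n \<Longrightarrow> v \<notin> {..<n} \<Longrightarrow> mv a b v = v"
  unfolding mv_def by auto

lemma mv_permutes: assumes "a < n" "b < n" shows "mv a b permutes {..<n}"
  unfolding permutes_def
proof (intro conjI allI impI)
  fix x assume "x \<notin> {..<n}" then show "mv a b x = x" using mv_out assms by blast
next
  fix y show "\<exists>!x. mv a b x = y"
  proof (rule ex1I[of _ "mv b a y"])
    show "mv a b (mv b a y) = y" by simp
  next
    fix x assume "mv a b x = y" then show "x = mv b a y" by auto
  qed
qed

lemma mv_mono: "u \<noteq> a \<Longrightarrow> v \<noteq> a \<Longrightarrow> (mv a b u \<le> mv a b v) = (u \<le> v)"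
  unfolding mv_def by auto

definition Perms :: "nat \<Rightarrow> (nat \<Rightarrow> nat) set" where "Perms n = {\<sigma>. \<sigma> permutes {..<n}}"
definition rowE :: "nat \<Rightarrow> (nat \<Rightarrow> nat) \<Rightarrow> (nat \<times> nat) set" where
  "rowE n \<sigma> = {(p, b). p < n \<and> b < n \<and> b \<noteq> \<sigma> p}"
definition Ed :: "nat \<Rightarrow> ((nat \<Rightarrow> nat) \<times> (nat \<times> nat)) set" where "Ed n = Sigma (Perms n) (rowE n)"
definition dst :: "(nat \<Rightarrow> nat) \<Rightarrow> nat \<Rightarrow> nat \<Rightarrow> (nat \<Rightarrow> nat)" where "dst \<sigma> p b = mv (\<sigma> p) b \<circ> \<sigma>"
definition Gam :: "(nat \<Rightarrow> nat) \<Rightarrow> nat \<Rightarrow> nat \<Rightarrow> real" where "Gam \<sigma> p b = 1 / \<bar>real b - real (\<sigma> p)\<bar>"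
definition revE :: "(nat \<Rightarrow> nat) \<times> (nat \<times> nat) \<Rightarrow> (nat \<Rightarrow> nat) \<times> (nat \<times> nat)" where
  "revE e = (case e of (\<sigma>, (p, b)) \<Rightarrow> (dst \<sigma> p b, (p, \<sigma> p)))"

lemma finite_Perms: "finite (Perms n)"
  unfolding Perms_def by (rule finite_permutations) simp

lemma id_Perms: "id \<in> Perms n" unfolding Perms_def by (simp add: permutes_id)

lemma finite_row: "finite (rowE n \<sigma>)"
  by (rule finite_subset[of _ "{..<n} \<times> {..<n}"]) (auto simp: rowE_def)

lemma finite_Ed: "finite (Ed n)" unfolding Ed_def using finite_Perms finite_row by auto

lemma perm_lt: "\<sigma> \<in> Perms n \<Longrightarrow> p < n \<Longrightarrow> \<sigma> p < n"
  unfolding Perms_def using permutes_in_image[of \<sigma> "{..<n}" p] by auto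

lemma perm_inj: "\<sigma> \<in> Perms n \<Longrightarrow> \<sigma> x = \<sigma> y \<Longrightarrow> x = y"
  unfolding Perms_def using permutes_inj[of \<sigma> "{..<n}"] by (auto simp: inj_def)

lemma dst_Perms: "\<sigma> \<in> Perms n \<Longrightarrow> p < n \<Longrightarrow> b < n \<Longrightarrow> dst \<sigma> p b \<in> Perms n"
  unfolding dst_def using permutes_compose[OF _ mv_permutes] perm_lt by (auto simp: Perms_def)

lemma dst_at: "dst \<sigma> p b p = b" unfolding dst_def mv_def by simp

lemma dst_dst: "dst (dst \<sigma> p b) p (\<sigma> p) = \<sigma>"
  unfolding dst_def by (auto simp: fun_eq_iff)

lemma revE_Ed: "e \<in> Ed n \<Longrightarrow> revE e \<in> Ed n"
  unfolding Ed_def revE_def rowE_def using dst_Perms perm_lt dst_at by (auto split: prod.splits)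

lemma revE_revE: "revE (revE e) = e"
  unfolding revE_def by (auto split: prod.splits simp: dst_at dst_dst)

lemma Gam_rev: "Gam (dst \<sigma> p b) p (\<sigma> p) = Gam \<sigma> p b"
  unfolding Gam_def dst_at by (simp add: abs_minus_commute)

lemma dst_ne: "b \<noteq> \<sigma> p \<Longrightarrow> dst \<sigma> p b \<noteq> \<sigma>"
  using dst_at[of \<sigma> p b] by auto


definition Dg :: "(nat \<Rightarrow> nat) \<Rightarrow> (nat \<Rightarrow> nat) \<Rightarrow> nat \<Rightarrow> nat \<Rightarrow> bool" where
  "Dg \<sigma> \<tau> i j = (cmp_matrix \<sigma> i j \<noteq> cmp_matrix \<tau> i j)"
definition gap :: "nat \<Rightarrow> nat \<Rightarrow> (nat \<Rightarrow> nat) \<Rightarrow> real" where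
  "gap i j \<sigma> = \<bar>real (\<sigma> i) - real (\<sigma> j)\<bar>"
definition rho :: "nat \<Rightarrow> nat \<Rightarrow> (nat \<Rightarrow> nat) \<Rightarrow> (nat \<Rightarrow> nat) \<Rightarrow> real" where
  "rho i j \<sigma> \<tau> = sqrt ((gap i j \<sigma> - 1/2) / (gap i j \<tau> - 1/2))"

lemma Dg_other:
  assumes "\<sigma> \<in> Perms n" "p \<noteq> i" "p \<noteq> j"
  shows "\<not> Dg \<sigma> (dst \<sigma> p b) i j"
proof -
  have "\<sigma> i \<noteq> \<sigma> p" "\<sigma> j \<noteq> \<sigma> p" using perm_inj[OF assms(1)] assms(2,3) by metis+
  then show ?thesis unfolding Dg_def cmp_matrix_def dst_def by (simp add: mv_mono)
qed

lemma Dg_i: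
  assumes "\<sigma> i < \<sigma> j"
  shows "Dg \<sigma> (dst \<sigma> i b) i j \<longleftrightarrow> \<sigma> j \<le> b"
    and "\<sigma> j \<le> b \<Longrightarrow> dst \<sigma> i b j = \<sigma> j - 1"
  using assms unfolding Dg_def cmp_matrix_def dst_def mv_def by auto

lemma Dg_j:
  assumes "\<sigma> i < \<sigma> j"
  shows "Dg \<sigma> (dst \<sigma> j b) i j \<longleftrightarrow> b \<le> \<sigma> i"
    and "b \<le> \<sigma> i \<Longrightarrow> dst \<sigma> j b i = \<sigma> i + 1"
  using assms unfolding Dg_def cmp_matrix_def dst_def mv_def by auto


lemma sum_filter_pair:
  assumes "finite A" "{x\<in>A. P x} = Pair i ` B"
  shows "(\<Sum>x\<in>A. if P x then f (snd x) else 0) = (\<Sum>b\<in>B. f b)"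
proof -
  have "(\<Sum>x\<in>A. if P x then f (snd x) else 0) = (\<Sum>x\<in>{x\<in>A. P x}. f (snd x))"
    using assms(1) by (simp add: sum.inter_filter)
  also have "\<dots> = (\<Sum>b\<in>B. f b)" unfolding assms(2) by (subst sum.reindex) (auto simp: inj_on_def)
  finally show ?thesis .
qed

lemma sumA:
  assumes "\<beta> < n" "s > 0"
  shows "(\<Sum>b\<in>{\<beta>..<n}. hf s (real b - real \<beta> + 1/2)) \<le> pi"
proof -
  have "(\<Sum>b\<in>{\<beta>..<n}. hf s (real b - real \<beta> + 1/2)) = (\<Sum>k\<in>{1..n-\<beta>}. hf s (real k - 1/2))"
  proof (rule sum.reindex_bij_witness[of _ "\<lambda>k. k + \<beta> - 1" "\<lambda>b. b + 1 - \<beta>"])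
    fix k assume k: "k \<in> {1..n-\<beta>}"
    show "k + \<beta> - 1 + 1 - \<beta> = k" using k by auto
    show "k + \<beta> - 1 \<in> {\<beta>..<n}" using k assms by auto
  next
    fix b assume b: "b \<in> {\<beta>..<n}"
    show "b + 1 - \<beta> + \<beta> - 1 = b" using b by auto
    show "b + 1 - \<beta> \<in> {1..n-\<beta>}" using b by auto
    have "real (b + 1 - \<beta>) = real b + 1 - real \<beta>" using b by (simp add: of_nat_diff)
    then show "hf s (real (b + 1 - \<beta>) - 1/2) = hf s (real b - real \<beta> + 1/2)" by (simp add: algebra_simps)
  qed
  also have "\<dots> \<le> pi" by (rule hilbert_sum[OF assms(2)])
  finally show ?thesis .
qed

lemma sumB:
  assumes "s > 0"
  shows "(\<Sum>b\<in>{..\<alpha>}. hf s (real \<alpha> - real b + 1/2)) \<le> pi"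
proof -
  have "(\<Sum>b\<in>{..\<alpha>}. hf s (real \<alpha> - real b + 1/2)) = (\<Sum>k\<in>{1..\<alpha>+1}. hf s (real k - 1/2))"
  proof (rule sum.reindex_bij_witness[of _ "\<lambda>k. \<alpha> + 1 - k" "\<lambda>b. \<alpha> + 1 - b"])
    fix k assume k: "k \<in> {1..\<alpha>+1}"
    show "\<alpha> + 1 - (\<alpha> + 1 - k) = k" using k by auto
    show "\<alpha> + 1 - k \<in> {..\<alpha>}" using k by auto
  next
    fix b assume b: "b \<in> {..\<alpha>}"
    show "\<alpha> + 1 - (\<alpha> + 1 - b) = b" using b by auto
    show "\<alpha> + 1 - b \<in> {1..\<alpha>+1}" using b by auto
    have "real (\<alpha> + 1 - b) = real \<alpha> + 1 - real b" using b by (simp add: of_nat_diff)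
    then show "hf s (real (\<alpha> + 1 - b) - 1/2) = hf s (real \<alpha> - real b + 1/2)" by (simp add: algebra_simps)
  qed
  also have "\<dots> \<le> pi" by (rule hilbert_sum[OF assms])
  finally show ?thesis .
qed

lemma Gam_rho_hf:
  fixes s t g :: real
  assumes "s > 0" "t > 0"
  shows "1 / (s + t) * sqrt (s / t) = hf s t"
  unfolding hf_def using assms by (simp add: real_sqrt_divide)

definition RF where
  "RF n i j \<sigma> = (\<Sum>x\<in>rowE n \<sigma>. if Dg \<sigma> (dst \<sigma> (fst x) (snd x)) i j
      then Gam \<sigma> (fst x) (snd x) * rho i j \<sigma> (dst \<sigma> (fst x) (snd x)) else 0)"

lemma RB_lt:
  assumes \<sigma>: "\<sigma> \<in> Perms n" and ij: "i < n" "j < n" and lt: "\<sigma> i < \<sigma> j"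
  shows "RF n i j \<sigma> \<le> 2 * pi"
proof -
  define \<alpha> where "\<alpha> = \<sigma> i"
  define \<beta> where "\<beta> = \<sigma> j"
  define s where "s = real \<beta> - real \<alpha> - 1/2"
  have ab: "\<alpha> < \<beta>" using lt unfolding \<alpha>_def \<beta>_def .
  have s0: "s > 0" unfolding s_def using ab by simp
  have ine: "i \<noteq> j" using lt by auto
  have bn: "\<beta> < n" "\<alpha> < n" unfolding \<alpha>_def \<beta>_def using perm_lt[OF \<sigma>] ij by auto
  let ?A = "\<lambda>x. if fst x = i \<and> \<beta> \<le> snd x then hf s (real (snd x) - real \<beta> + 1/2) else 0"
  let ?B = "\<lambda>x. if fst x = j \<and> snd x \<le> \<alpha> then hf s (real \<alpha> - real (snd x) + 1/2) else 0"
  have eq: "(if Dg \<sigma> (dst \<sigma> (fst x) (snd x)) i j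
      then Gam \<sigma> (fst x) (snd x) * rho i j \<sigma> (dst \<sigma> (fst x) (snd x)) else 0) = ?A x + ?B x"
    if x: "x \<in> rowE n \<sigma>" for x
  proof -
    obtain p b where pb: "x = (p, b)" by (cases x)
    show ?thesis
    proof (cases "p = i")
      case True
      have npj: "\<not> (p = j)" using True ine by simp
      have calc: "(if Dg \<sigma> (dst \<sigma> i b) i j then Gam \<sigma> i b * rho i j \<sigma> (dst \<sigma> i b) else 0)
          = (if \<beta> \<le> b then hf s (real b - real \<beta> + 1/2) else 0)"
      proof (cases "\<beta> \<le> b")
        case True
        have D: "Dg \<sigma> (dst \<sigma> i b) i j" using Dg_i(1)[of \<sigma> i j b, OF lt] True unfolding \<beta>_def by simp
        have dj: "dst \<sigma> i b j = \<beta> - 1" using Dg_i(2)[of \<sigma> i j b, OF lt] True unfolding \<beta>_def by simp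
        have di: "dst \<sigma> i b i = b" by (rule dst_at)
        have r1: "real (\<beta> - 1) = real \<beta> - 1" using ab by (simp add: of_nat_diff)
        have g1: "gap i j (dst \<sigma> i b) - 1/2 = real b - real \<beta> + 1/2"
          unfolding gap_def di dj r1 using True by simp
        have g0: "gap i j \<sigma> - 1/2 = s" unfolding gap_def s_def \<alpha>_def \<beta>_def using lt by simp
        have G: "Gam \<sigma> i b = 1 / (s + (real b - real \<beta> + 1/2))"
          unfolding Gam_def s_def \<alpha>_def[symmetric] using True ab by simp
        have "Gam \<sigma> i b * rho i j \<sigma> (dst \<sigma> i b) = hf s (real b - real \<beta> + 1/2)"
          unfolding rho_def g1 g0 G by (rule Gam_rho_hf[OF s0]) (use True in simp)
        then show ?thesis using D True by simp
      next
        case False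
        then show ?thesis using Dg_i(1)[of \<sigma> i j b, OF lt] unfolding \<beta>_def by simp
      qed
      have L: "(if Dg \<sigma> (dst \<sigma> (fst x) (snd x)) i j
          then Gam \<sigma> (fst x) (snd x) * rho i j \<sigma> (dst \<sigma> (fst x) (snd x)) else 0)
          = (if Dg \<sigma> (dst \<sigma> i b) i j then Gam \<sigma> i b * rho i j \<sigma> (dst \<sigma> i b) else 0)"
        using True pb by simp
      have A: "?A x = (if \<beta> \<le> b then hf s (real b - real \<beta> + 1/2) else 0)" using True pb by simp
      have B: "?B x = 0" using npj pb by simp
      show ?thesis unfolding L A B by (simp only: add_0_right calc)
    next
      case pi: False
      show ?thesis
      proof (cases "p = j")
        case True
        have calc: "(if Dg \<sigma> (dst \<sigma> j b) i j then Gam \<sigma> j b * rho i j \<sigma> (dst \<sigma> j b) else 0)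
          = (if b \<le> \<alpha> then hf s (real \<alpha> - real b + 1/2) else 0)"
        proof (cases "b \<le> \<alpha>")
          case True
          have D: "Dg \<sigma> (dst \<sigma> j b) i j" using Dg_j(1)[of \<sigma> i j b, OF lt] True unfolding \<alpha>_def by simp
          have di: "dst \<sigma> j b i = \<alpha> + 1" using Dg_j(2)[of \<sigma> i j b, OF lt] True unfolding \<alpha>_def by simp
          have dj: "dst \<sigma> j b j = b" by (rule dst_at)
          have g1: "gap i j (dst \<sigma> j b) - 1/2 = real \<alpha> - real b + 1/2"
            unfolding gap_def di dj using True by simp
          have g0: "gap i j \<sigma> - 1/2 = s" unfolding gap_def s_def \<alpha>_def \<beta>_def using lt by simp
          have G: "Gam \<sigma> j b = 1 / (s + (real \<alpha> - real b + 1/2))"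
            unfolding Gam_def s_def \<beta>_def[symmetric] using True ab by simp
          have "Gam \<sigma> j b * rho i j \<sigma> (dst \<sigma> j b) = hf s (real \<alpha> - real b + 1/2)"
            unfolding rho_def g1 g0 G by (rule Gam_rho_hf[OF s0]) (use True in simp)
          then show ?thesis using D True by simp
        next
          case False
          then show ?thesis using Dg_j(1)[of \<sigma> i j b, OF lt] unfolding \<alpha>_def by simp
        qed
        have L: "(if Dg \<sigma> (dst \<sigma> (fst x) (snd x)) i j
          then Gam \<sigma> (fst x) (snd x) * rho i j \<sigma> (dst \<sigma> (fst x) (snd x)) else 0)
          = (if Dg \<sigma> (dst \<sigma> j b) i j then Gam \<sigma> j b * rho i j \<sigma> (dst \<sigma> j b) else 0)"
          using True pb by simp
        have B: "?B x = (if b \<le> \<alpha> then hf s (real \<alpha> - real b + 1/2) else 0)" using True pb by simp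
        have A: "?A x = 0" using pi pb by simp
        show ?thesis unfolding L A B by (simp only: add_0_left calc)
      next
        case False
        then show ?thesis using pi pb Dg_other[OF \<sigma>, of p i j b] by simp
      qed
    qed
  qed
  have "RF n i j \<sigma> = (\<Sum>x\<in>rowE n \<sigma>. ?A x + ?B x)"
    unfolding RF_def by (rule sum.cong[OF refl]) (rule eq)
  also have "\<dots> = (\<Sum>x\<in>rowE n \<sigma>. ?A x) + (\<Sum>x\<in>rowE n \<sigma>. ?B x)" by (rule sum.distrib)
  also have "(\<Sum>x\<in>rowE n \<sigma>. ?A x) = (\<Sum>b\<in>{\<beta>..<n}. hf s (real b - real \<beta> + 1/2))"
    by (rule sum_filter_pair[OF finite_row]) (use ab bn ij in \<open>auto simp: rowE_def \<alpha>_def\<close>)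
  also have "(\<Sum>x\<in>rowE n \<sigma>. ?B x) = (\<Sum>b\<in>{..\<alpha>}. hf s (real \<alpha> - real b + 1/2))"
    by (rule sum_filter_pair[OF finite_row]) (use ab bn ij in \<open>auto simp: rowE_def \<beta>_def\<close>)
  finally show ?thesis using sumA[OF bn(1) s0] sumB[OF s0, of \<alpha>] by linarith
qed


lemma Dg_sym: "\<sigma> \<in> Perms n \<Longrightarrow> \<tau> \<in> Perms n \<Longrightarrow> i \<noteq> j \<Longrightarrow> Dg \<sigma> \<tau> j i = Dg \<sigma> \<tau> i j"
  unfolding Dg_def cmp_matrix_def using perm_inj[of \<sigma> n i j] perm_inj[of \<tau> n i j] by auto

lemma rho_sym: "rho j i \<sigma> \<tau> = rho i j \<sigma> \<tau>"
  unfolding rho_def gap_def by (simp add: abs_minus_commute)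

lemma Dg_refl: "\<not> Dg \<sigma> \<tau> i i" unfolding Dg_def cmp_matrix_def by simp

lemma RB:
  assumes \<sigma>: "\<sigma> \<in> Perms n" and ij: "i < n" "j < n"
  shows "RF n i j \<sigma> \<le> 2 * pi"
proof (cases "i = j")
  case True
  then have "RF n i j \<sigma> = 0" unfolding RF_def by (simp add: Dg_refl)
  then show ?thesis by simp
next
  case ne: False
  have sne: "\<sigma> i \<noteq> \<sigma> j" using perm_inj[OF \<sigma>] ne by metis
  show ?thesis
  proof (cases "\<sigma> i < \<sigma> j")
    case True then show ?thesis by (rule RB_lt[OF \<sigma> ij])
  next
    case False
    then have lt: "\<sigma> j < \<sigma> i" using sne by simp
    have "RF n i j \<sigma> = RF n j i \<sigma>"
      unfolding RF_def
    proof (rule sum.cong[OF refl])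
      fix x assume x: "x \<in> rowE n \<sigma>"
      have "dst \<sigma> (fst x) (snd x) \<in> Perms n" using x dst_Perms[OF \<sigma>] by (auto simp: rowE_def)
      then show "(if Dg \<sigma> (dst \<sigma> (fst x) (snd x)) i j then Gam \<sigma> (fst x) (snd x) * rho i j \<sigma> (dst \<sigma> (fst x) (snd x)) else 0) =
        (if Dg \<sigma> (dst \<sigma> (fst x) (snd x)) j i then Gam \<sigma> (fst x) (snd x) * rho j i \<sigma> (dst \<sigma> (fst x) (snd x)) else 0)"
        using Dg_sym[OF \<sigma> _ ne] rho_sym by simp
    qed
    also have "\<dots> \<le> 2 * pi" by (rule RB_lt[OF \<sigma> ij(2) ij(1) lt])
    finally show ?thesis .
  qed
qed


lemma harm_rev: "(\<Sum>a<n. 1 / (real n - real a)) = (harm n :: real)"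
proof -
  have "(\<Sum>a<n. 1 / (real n - real a)) = (\<Sum>k\<in>{1..n}. 1 / real k)"
  proof (rule sum.reindex_bij_witness[of _ "\<lambda>k. n - k" "\<lambda>a. n - a"])
    fix a assume a: "a \<in> {..<n}"
    show "n - (n - a) = a" using a by auto
    show "n - a \<in> {1..n}" using a by auto
    show "1 / real (n - a) = 1 / (real n - real a)" using a by (simp add: of_nat_diff)
  next
    fix k assume k: "k \<in> {1..n}"
    show "n - (n - k) = k" using k by auto
    show "n - k \<in> {..<n}" using k by auto
  qed
  also have "\<dots> = harm n" unfolding harm_def by (simp add: inverse_eq_divide)
  finally show ?thesis .
qed

definition hs :: "nat \<Rightarrow> real" where
  "hs n = (\<Sum>a<n. \<Sum>b\<in>{..<n}-{a}. 1 / \<bar>real b - real a\<bar>)"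

lemma hs_formula: "hs n = 2 * (real n * harm n - real n)"
proof (induction n)
  case 0 then show ?case by (simp add: hs_def)
next
  case (Suc n)
  let ?f = "\<lambda>a b. 1 / \<bar>real b - real a\<bar>"
  have "hs (Suc n) = (\<Sum>a<n. \<Sum>b\<in>{..<Suc n}-{a}. ?f a b) + (\<Sum>b\<in>{..<Suc n}-{n}. ?f n b)"
    unfolding hs_def by simp
  also have "(\<Sum>a<n. \<Sum>b\<in>{..<Suc n}-{a}. ?f a b) = (\<Sum>a<n. (\<Sum>b\<in>{..<n}-{a}. ?f a b) + 1 / (real n - real a))"
  proof (rule sum.cong[OF refl])
    fix a assume a: "a \<in> {..<n}"
    have e: "{..<Suc n}-{a} = insert n ({..<n}-{a})" using a by auto
    show "(\<Sum>b\<in>{..<Suc n}-{a}. ?f a b) = (\<Sum>b\<in>{..<n}-{a}. ?f a b) + 1 / (real n - real a)"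
      unfolding e using a by (subst sum.insert) auto
  qed
  also have "\<dots> = hs n + harm n" unfolding hs_def sum.distrib harm_rev ..
  also have "(\<Sum>b\<in>{..<Suc n}-{n}. ?f n b) = (\<Sum>b<n. 1 / (real n - real b))"
  proof -
    have e: "{..<Suc n}-{n} = {..<n}" by auto
    show ?thesis unfolding e by (rule sum.cong[OF refl]) auto
  qed
  also have "\<dots> = harm n" by (rule harm_rev)
  finally have h: "hs (Suc n) = hs n + harm n + harm n" .
  have e2: "(1 + real n) * harm (Suc n) = real n * harm n + harm n + 1"
  proof -
    have i: "(1 + real n) * inverse (1 + real n) = 1" by (rule right_inverse) simp
    have i2: "inverse (1 + real n) + real n * inverse (1 + real n) = 1" by (metis i distrib_right mult_1)
    show ?thesis unfolding harm_Suc by (simp add: distrib_right distrib_left i2)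
  qed
  show ?case unfolding e2 h Suc.IH of_nat_Suc by (simp add: algebra_simps)
qed

lemma row_Sigma: "rowE n \<sigma> = Sigma {..<n} (\<lambda>p. {..<n} - {\<sigma> p})"
  unfolding rowE_def by auto

lemma row_Gam: assumes \<sigma>: "\<sigma> \<in> Perms n"
  shows "(\<Sum>x\<in>rowE n \<sigma>. Gam \<sigma> (fst x) (snd x)) = hs n"
proof -
  have "(\<Sum>x\<in>rowE n \<sigma>. Gam \<sigma> (fst x) (snd x)) = (\<Sum>p<n. \<Sum>b\<in>{..<n} - {\<sigma> p}. 1 / \<bar>real b - real (\<sigma> p)\<bar>)"
    unfolding row_Sigma Gam_def by (simp add: sum.Sigma split_def)
  also have "\<dots> = hs n" unfolding hs_def
    by (rule sum.reindex_bij_betw[where g = "\<lambda>a. \<Sum>b\<in>{..<n}-{a}. 1 / \<bar>real b - real a\<bar>"])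
       (use \<sigma> in \<open>auto simp: Perms_def intro: permutes_imp_bij\<close>)
  finally show ?thesis .
qed

lemma harm_ge: "n > 0 \<Longrightarrow> harm n - ln (real n) \<ge> (euler_mascheroni :: real)"
proof -
  assume n: "n > 0"
  have "decseq (\<lambda>m. harm (Suc m) - ln (real (Suc m)) :: real)" by (rule decseq_harm_diff_ln)
  moreover have "(\<lambda>m. harm (Suc m) - ln (real (Suc m)) :: real) \<longlonglongrightarrow> euler_mascheroni"
    using LIMSEQ_Suc[OF euler_mascheroni_LIMSEQ] by simp
  ultimately have "euler_mascheroni \<le> harm (Suc (n - 1)) - ln (real (Suc (n - 1)))"
    by (rule decseq_ge)
  then show ?thesis using n by simp
qed


definition Nrm :: "nat \<Rightarrow> qvec \<Rightarrow> nat \<Rightarrow> nat \<Rightarrow> real" where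
  "Nrm w \<phi> i j = (\<Sum>c<(2::nat)^w. (cmod (\<phi> (i,j,True,c)))\<^sup>2 + (cmod (\<phi> (i,j,False,c)))\<^sup>2)"

lemma Re_cnj_mult: "Re (cnj z * z) = (cmod z)\<^sup>2"
  unfolding cmod_power2 by (simp add: power2_eq_square)

lemma Nrm_nonneg: "Nrm w \<phi> i j \<ge> 0" unfolding Nrm_def by (intro sum_nonneg) auto

lemma qinner_self_Nrm: "Re (qinner n w \<phi> \<phi>) = (\<Sum>i<n. \<Sum>j<n. Nrm w \<phi> i j)"
proof -
  have Re_blk: "\<And>a b. Re (cnj a * a + cnj b * b) = (cmod a)\<^sup>2 + (cmod b)\<^sup>2"
    by (simp only: plus_complex.sel Re_cnj_mult)
  show ?thesis unfolding qinner_blocks Nrm_def blk_def by (simp only: Re_sum Re_blk)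
qed

lemma amgm:
  fixes x y l :: real
  assumes "x \<ge> 0" "y \<ge> 0" "l > 0"
  shows "x * y \<le> l / 2 * x\<^sup>2 + y\<^sup>2 / (2 * l)"
proof -
  have "l / 2 * x\<^sup>2 + y\<^sup>2 / (2 * l) - x * y = (l * x - y)\<^sup>2 / (2 * l)"
    using assms(3) by (simp add: field_simps power2_eq_square)
  moreover have "(l * x - y)\<^sup>2 / (2 * l) \<ge> 0" using assms(3) by simp
  ultimately show ?thesis by linarith
qed

lemma sq_diff: "(cmod (u - v))\<^sup>2 \<le> 2 * (cmod u)\<^sup>2 + 2 * (cmod v)\<^sup>2"
proof -
  have "cmod (u - v) \<le> cmod u + cmod v" by (rule norm_triangle_ineq4)
  hence "(cmod (u - v))\<^sup>2 \<le> (cmod u + cmod v)\<^sup>2" by (intro power_mono) auto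
  also have "\<dots> \<le> 2 * (cmod u)\<^sup>2 + 2 * (cmod v)\<^sup>2"
    using sum_squares_ge_zero[of "cmod u - cmod v" 0] by (simp add: power2_eq_square algebra_simps)
  finally show ?thesis .
qed

lemma cell_bound:
  fixes aT aF bT bF :: complex and l :: real
  assumes l: "l > 0"
  shows "cmod (cnj aT * bF + cnj aF * bT - (cnj aT * bT + cnj aF * bF))
     \<le> l * ((cmod aT)\<^sup>2 + (cmod aF)\<^sup>2) + ((cmod bT)\<^sup>2 + (cmod bF)\<^sup>2) / l"
proof -
  have e: "cnj aT * bF + cnj aF * bT - (cnj aT * bT + cnj aF * bF) = cnj (aT - aF) * (bF - bT)"
    by (simp add: algebra_simps)
  have "cmod (cnj (aT - aF) * (bF - bT)) = cmod (aT - aF) * cmod (bF - bT)"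
    by (simp only: norm_mult complex_mod_cnj)
  also have "\<dots> \<le> l / 2 * (cmod (aT - aF))\<^sup>2 + (cmod (bF - bT))\<^sup>2 / (2 * l)"
    by (rule amgm) (use l in auto)
  also have "\<dots> \<le> l / 2 * (2 * (cmod aT)\<^sup>2 + 2 * (cmod aF)\<^sup>2) + (2 * (cmod bF)\<^sup>2 + 2 * (cmod bT)\<^sup>2) / (2 * l)"
    using l by (intro add_mono mult_left_mono divide_right_mono sq_diff) auto
  also have "\<dots> = l * ((cmod aT)\<^sup>2 + (cmod aF)\<^sup>2) + ((cmod bT)\<^sup>2 + (cmod bF)\<^sup>2) / l"
    using l by (simp add: field_simps)
  finally show ?thesis unfolding e .
qed

lemma qdiff: "qinner n w (query_gate \<sigma> \<phi>) (query_gate \<tau> \<psi>) - qinner n w \<phi> \<psi>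
      = (\<Sum>i<n. \<Sum>j<n. \<Sum>c<(2::nat)^w. (if cmp_matrix \<sigma> i j = cmp_matrix \<tau> i j then blk \<phi> \<psi> i j c else
           cnj (\<phi> (i,j,True,c)) * \<psi> (i,j,False,c) + cnj (\<phi> (i,j,False,c)) * \<psi> (i,j,True,c)) - blk \<phi> \<psi> i j c)"
proof -
  have q1: "qinner n w (query_gate \<sigma> \<phi>) (query_gate \<tau> \<psi>) = (\<Sum>i<n. \<Sum>j<n. \<Sum>c<(2::nat)^w. (if cmp_matrix \<sigma> i j = cmp_matrix \<tau> i j then blk \<phi> \<psi> i j c else
           cnj (\<phi> (i,j,True,c)) * \<psi> (i,j,False,c) + cnj (\<phi> (i,j,False,c)) * \<psi> (i,j,True,c)))"
    by (rule qinner_query)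
  have q2: "qinner n w \<phi> \<psi> = (\<Sum>i<n. \<Sum>j<n. \<Sum>c<(2::nat)^w. blk \<phi> \<psi> i j c)" by (rule qinner_blocks)
  show ?thesis unfolding q1 q2 by (simp only: sum_subtractf)
qed

lemma block_bound:
  assumes l: "l > 0"
  shows "cmod (\<Sum>c<(2::nat)^w. (cnj (\<phi> (i,j,True,c)) * \<psi> (i,j,False,c) + cnj (\<phi> (i,j,False,c)) * \<psi> (i,j,True,c)) - blk \<phi> \<psi> i j c)
    \<le> l * Nrm w \<phi> i j + Nrm w \<psi> i j / l"
proof -
  have "cmod (\<Sum>c<(2::nat)^w. (cnj (\<phi> (i,j,True,c)) * \<psi> (i,j,False,c) + cnj (\<phi> (i,j,False,c)) * \<psi> (i,j,True,c)) - blk \<phi> \<psi> i j c)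
     \<le> (\<Sum>c<(2::nat)^w. cmod ((cnj (\<phi> (i,j,True,c)) * \<psi> (i,j,False,c) + cnj (\<phi> (i,j,False,c)) * \<psi> (i,j,True,c)) - blk \<phi> \<psi> i j c))"
    by (rule norm_sum)
  also have "\<dots> \<le> (\<Sum>c<(2::nat)^w. l * ((cmod (\<phi> (i,j,True,c)))\<^sup>2 + (cmod (\<phi> (i,j,False,c)))\<^sup>2)
            + ((cmod (\<psi> (i,j,True,c)))\<^sup>2 + (cmod (\<psi> (i,j,False,c)))\<^sup>2) / l)"
    unfolding blk_def by (rule sum_mono) (rule cell_bound[OF l])
  also have "\<dots> = l * Nrm w \<phi> i j + Nrm w \<psi> i j / l"
    unfolding Nrm_def sum.distrib[of "\<lambda>c. l * ((cmod (\<phi> (i,j,True,c)))\<^sup>2 + (cmod (\<phi> (i,j,False,c)))\<^sup>2)"]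
      by (simp only: sum_distrib_left[symmetric] sum_divide_distrib[symmetric])
  finally show ?thesis .
qed

lemma query_diff_bound:
  assumes lpos: "\<And>i j. Dg \<sigma> \<tau> i j \<Longrightarrow> l i j > 0"
  shows "cmod (qinner n w (query_gate \<sigma> \<phi>) (query_gate \<tau> \<psi>) - qinner n w \<phi> \<psi>)
    \<le> (\<Sum>i<n. \<Sum>j<n. if Dg \<sigma> \<tau> i j then l i j * Nrm w \<phi> i j + Nrm w \<psi> i j / l i j else 0)"
proof -
  define F where "F i j c = (if cmp_matrix \<sigma> i j = cmp_matrix \<tau> i j then blk \<phi> \<psi> i j c else
           cnj (\<phi> (i,j,True,c)) * \<psi> (i,j,False,c) + cnj (\<phi> (i,j,False,c)) * \<psi> (i,j,True,c)) - blk \<phi> \<psi> i j c" for i j c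
  have "cmod (qinner n w (query_gate \<sigma> \<phi>) (query_gate \<tau> \<psi>) - qinner n w \<phi> \<psi>) = cmod (\<Sum>i<n. \<Sum>j<n. \<Sum>c<(2::nat)^w. F i j c)"
    unfolding qdiff F_def ..
  also have "\<dots> \<le> (\<Sum>i<n. cmod (\<Sum>j<n. \<Sum>c<(2::nat)^w. F i j c))" by (rule norm_sum)
  also have "\<dots> \<le> (\<Sum>i<n. \<Sum>j<n. cmod (\<Sum>c<(2::nat)^w. F i j c))" by (rule sum_mono) (rule norm_sum)
  also have "\<dots> \<le> (\<Sum>i<n. \<Sum>j<n. if Dg \<sigma> \<tau> i j then l i j * Nrm w \<phi> i j + Nrm w \<psi> i j / l i j else 0)"
  proof (rule sum_mono, rule sum_mono)
    fix i j
    show "cmod (\<Sum>c<(2::nat)^w. F i j c) \<le> (if Dg \<sigma> \<tau> i j then l i j * Nrm w \<phi> i j + Nrm w \<psi> i j / l i j else 0)"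
    proof (cases "Dg \<sigma> \<tau> i j")
      case False
      then have "\<And>c. F i j c = 0" unfolding F_def Dg_def by simp
      then show ?thesis using False by simp
    next
      case True
      then have "\<And>c. F i j c = (cnj (\<phi> (i,j,True,c)) * \<psi> (i,j,False,c) + cnj (\<phi> (i,j,False,c)) * \<psi> (i,j,True,c)) - blk \<phi> \<psi> i j c"
        unfolding F_def Dg_def by simp
      then show ?thesis using True block_bound[OF lpos[OF True], where w=w and \<phi>=\<phi> and \<psi>=\<psi> and i=i and j=j] by simp
    qed
  qed
  finally show ?thesis .
qed


definition srcE :: "(nat \<Rightarrow> nat) \<times> (nat \<times> nat) \<Rightarrow> (nat \<Rightarrow> nat)" where "srcE e = fst e"
definition dstE :: "(nat \<Rightarrow> nat) \<times> (nat \<times> nat) \<Rightarrow> (nat \<Rightarrow> nat)" where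
  "dstE e = dst (fst e) (fst (snd e)) (snd (snd e))"
definition GamE :: "(nat \<Rightarrow> nat) \<times> (nat \<times> nat) \<Rightarrow> real" where
  "GamE e = Gam (fst e) (fst (snd e)) (snd (snd e))"

lemma srcE_Perms: "e \<in> Ed n \<Longrightarrow> srcE e \<in> Perms n" unfolding Ed_def srcE_def by auto
lemma dstE_Perms: "e \<in> Ed n \<Longrightarrow> dstE e \<in> Perms n"
  unfolding Ed_def dstE_def rowE_def using dst_Perms by auto
lemma src_revE: "srcE (revE e) = dstE e" unfolding srcE_def dstE_def revE_def by (auto split: prod.splits)
lemma dst_revE: "dstE (revE e) = srcE e" unfolding srcE_def dstE_def revE_def by (auto split: prod.splits simp: dst_dst)
lemma Gam_revE: "GamE (revE e) = GamE e" unfolding GamE_def revE_def by (auto split: prod.splits simp: Gam_rev)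
lemma GamE_nonneg: "GamE e \<ge> 0" unfolding GamE_def Gam_def by simp

lemma gap_ge: assumes "\<sigma> \<in> Perms n" "i \<noteq> j" shows "gap i j \<sigma> \<ge> 1"
proof -
  have "\<sigma> i \<noteq> \<sigma> j" using perm_inj[OF assms(1)] assms(2) by metis
  then show ?thesis unfolding gap_def by (cases "\<sigma> i < \<sigma> j") auto
qed

lemma rho_pos: assumes "\<sigma> \<in> Perms n" "\<tau> \<in> Perms n" "Dg \<sigma> \<tau> i j" shows "rho i j \<sigma> \<tau> > 0"
proof -
  have ij: "i \<noteq> j" using assms(3) Dg_refl by metis
  show ?thesis unfolding rho_def using gap_ge[OF assms(1) ij] gap_ge[OF assms(2) ij] by simp
qed

lemma rho_inv: "rho i j \<tau> \<sigma> = 1 / rho i j \<sigma> \<tau>"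
  unfolding rho_def by (simp add: real_sqrt_divide)

lemma Dg_comm: "Dg \<tau> \<sigma> i j = Dg \<sigma> \<tau> i j" unfolding Dg_def by auto

definition T1 where "T1 n w \<phi> e = (\<Sum>i<n. \<Sum>j<n. if Dg (srcE e) (dstE e) i j
   then GamE e * rho i j (srcE e) (dstE e) * Nrm w (\<phi> (srcE e)) i j else 0)"
definition T2 where "T2 n w \<phi> e = (\<Sum>i<n. \<Sum>j<n. if Dg (srcE e) (dstE e) i j
   then GamE e * (Nrm w (\<phi> (dstE e)) i j / rho i j (srcE e) (dstE e)) else 0)"

lemma edge_bound:
  assumes e: "e \<in> Ed n"
  shows "GamE e * cmod (qinner n w (query_gate (srcE e) (\<phi> (srcE e))) (query_gate (dstE e) (\<phi> (dstE e)))
            - qinner n w (\<phi> (srcE e)) (\<phi> (dstE e))) \<le> T1 n w \<phi> e + T2 n w \<phi> e"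
proof -
  let ?s = "srcE e" and ?t = "dstE e"
  have lp: "\<And>i j. Dg ?s ?t i j \<Longrightarrow> rho i j ?s ?t > 0"
    by (rule rho_pos[OF srcE_Perms[OF e] dstE_Perms[OF e]])
  have "GamE e * cmod (qinner n w (query_gate ?s (\<phi> ?s)) (query_gate ?t (\<phi> ?t)) - qinner n w (\<phi> ?s) (\<phi> ?t))
     \<le> GamE e * (\<Sum>i<n. \<Sum>j<n. if Dg ?s ?t i j then rho i j ?s ?t * Nrm w (\<phi> ?s) i j + Nrm w (\<phi> ?t) i j / rho i j ?s ?t else 0)"
    by (rule mult_left_mono[OF query_diff_bound[where l = "\<lambda>i j. rho i j ?s ?t", OF lp] GamE_nonneg])
  also have "\<dots> = T1 n w \<phi> e + T2 n w \<phi> e"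
  proof -
    have pt: "GamE e * (if Dg ?s ?t i j then rho i j ?s ?t * Nrm w (\<phi> ?s) i j + Nrm w (\<phi> ?t) i j / rho i j ?s ?t else 0)
      = (if Dg ?s ?t i j then GamE e * rho i j ?s ?t * Nrm w (\<phi> ?s) i j else 0)
        + (if Dg ?s ?t i j then GamE e * (Nrm w (\<phi> ?t) i j / rho i j ?s ?t) else 0)" for i j
      by (cases "Dg ?s ?t i j") (simp_all add: distrib_left mult.assoc)
    show ?thesis unfolding T1_def T2_def sum_distrib_left pt sum.distrib ..
  qed
  finally show ?thesis .
qed

lemma revE_bij: "bij_betw revE (Ed n) (Ed n)"
  by (rule bij_betw_byWitness[where f'=revE]) (auto simp: revE_revE revE_Ed)

lemma T1_rev: "T1 n w \<phi> (revE e) = T2 n w \<phi> e"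
proof -
  have r: "rho i j (dstE e) (srcE e) = 1 / rho i j (srcE e) (dstE e)" for i j by (rule rho_inv)
  show ?thesis unfolding T1_def T2_def src_revE dst_revE Gam_revE Dg_comm[of "dstE e"] r
    by (intro sum.cong refl) simp
qed

lemma T2_T1: "(\<Sum>e\<in>Ed n. T2 n w \<phi> e) = (\<Sum>e\<in>Ed n. T1 n w \<phi> e)"
proof -
  have "(\<Sum>e\<in>Ed n. T1 n w \<phi> (revE e)) = (\<Sum>e\<in>Ed n. T1 n w \<phi> e)"
    by (rule sum.reindex_bij_betw[OF revE_bij])
  then show ?thesis unfolding T1_rev .
qed


lemma T1_row:
  assumes \<sigma>: "\<sigma> \<in> Perms n"
  shows "(\<Sum>x\<in>rowE n \<sigma>. T1 n w \<phi> (\<sigma>, x)) = (\<Sum>i<n. \<Sum>j<n. Nrm w (\<phi> \<sigma>) i j * RF n i j \<sigma>)"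
proof -
  have "(\<Sum>x\<in>rowE n \<sigma>. T1 n w \<phi> (\<sigma>, x)) = (\<Sum>x\<in>rowE n \<sigma>. \<Sum>i<n. \<Sum>j<n.
      Nrm w (\<phi> \<sigma>) i j * (if Dg \<sigma> (dst \<sigma> (fst x) (snd x)) i j then Gam \<sigma> (fst x) (snd x) * rho i j \<sigma> (dst \<sigma> (fst x) (snd x)) else 0))"
    unfolding T1_def srcE_def dstE_def GamE_def by (intro sum.cong refl) (simp add: mult_ac)
  also have "\<dots> = (\<Sum>i<n. \<Sum>x\<in>rowE n \<sigma>. \<Sum>j<n.
      Nrm w (\<phi> \<sigma>) i j * (if Dg \<sigma> (dst \<sigma> (fst x) (snd x)) i j then Gam \<sigma> (fst x) (snd x) * rho i j \<sigma> (dst \<sigma> (fst x) (snd x)) else 0))"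
    by (rule sum.swap)
  also have "\<dots> = (\<Sum>i<n. \<Sum>j<n. \<Sum>x\<in>rowE n \<sigma>.
      Nrm w (\<phi> \<sigma>) i j * (if Dg \<sigma> (dst \<sigma> (fst x) (snd x)) i j then Gam \<sigma> (fst x) (snd x) * rho i j \<sigma> (dst \<sigma> (fst x) (snd x)) else 0))"
    by (rule sum.cong[OF refl], rule sum.swap)
  also have "\<dots> = (\<Sum>i<n. \<Sum>j<n. Nrm w (\<phi> \<sigma>) i j * RF n i j \<sigma>)"
    unfolding RF_def by (simp only: sum_distrib_left)
  finally show ?thesis .
qed

lemma T1_total:
  assumes norm1: "\<And>\<sigma>. \<sigma> \<in> Perms n \<Longrightarrow> Re (qinner n w (\<phi> \<sigma>) (\<phi> \<sigma>)) = 1"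
  shows "(\<Sum>e\<in>Ed n. T1 n w \<phi> e) \<le> 2 * pi * real (card (Perms n))"
proof -
  have "(\<Sum>e\<in>Ed n. T1 n w \<phi> e) = (\<Sum>\<sigma>\<in>Perms n. \<Sum>x\<in>rowE n \<sigma>. T1 n w \<phi> (\<sigma>, x))"
    unfolding Ed_def by (subst sum.Sigma) (auto simp: finite_Perms finite_row case_prod_eta)
  also have "\<dots> = (\<Sum>\<sigma>\<in>Perms n. \<Sum>i<n. \<Sum>j<n. Nrm w (\<phi> \<sigma>) i j * RF n i j \<sigma>)"
    by (rule sum.cong[OF refl]) (rule T1_row)
  also have "\<dots> \<le> (\<Sum>\<sigma>\<in>Perms n. \<Sum>i<n. \<Sum>j<n. Nrm w (\<phi> \<sigma>) i j * (2 * pi))"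
  proof (rule sum_mono, rule sum_mono, rule sum_mono)
    fix \<sigma> i j assume "\<sigma> \<in> Perms n" "i \<in> {..<n}" "j \<in> {..<n}"
    then show "Nrm w (\<phi> \<sigma>) i j * RF n i j \<sigma> \<le> Nrm w (\<phi> \<sigma>) i j * (2 * pi)"
      by (intro mult_left_mono RB Nrm_nonneg) auto
  qed
  also have "\<dots> = (\<Sum>\<sigma>\<in>Perms n. 2 * pi * Re (qinner n w (\<phi> \<sigma>) (\<phi> \<sigma>)))"
    unfolding qinner_self_Nrm by (simp add: sum_distrib_left sum_distrib_right mult.commute)
  also have "\<dots> = (\<Sum>\<sigma>\<in>Perms n. 2 * pi)" by (rule sum.cong[OF refl]) (simp add: norm1)
  also have "\<dots> = 2 * pi * real (card (Perms n))" by simp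
  finally show ?thesis .
qed

lemma schur_total:
  assumes norm1: "\<And>\<sigma>. \<sigma> \<in> Perms n \<Longrightarrow> Re (qinner n w (\<phi> \<sigma>) (\<phi> \<sigma>)) = 1"
  shows "(\<Sum>e\<in>Ed n. GamE e * cmod (qinner n w (query_gate (srcE e) (\<phi> (srcE e))) (query_gate (dstE e) (\<phi> (dstE e)))
            - qinner n w (\<phi> (srcE e)) (\<phi> (dstE e)))) \<le> 4 * pi * real (card (Perms n))"
proof -
  have "(\<Sum>e\<in>Ed n. GamE e * cmod (qinner n w (query_gate (srcE e) (\<phi> (srcE e))) (query_gate (dstE e) (\<phi> (dstE e)))
            - qinner n w (\<phi> (srcE e)) (\<phi> (dstE e)))) \<le> (\<Sum>e\<in>Ed n. T1 n w \<phi> e + T2 n w \<phi> e)"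
    by (rule sum_mono) (rule edge_bound)
  also have "\<dots> = (\<Sum>e\<in>Ed n. T1 n w \<phi> e) + (\<Sum>e\<in>Ed n. T2 n w \<phi> e)" by (rule sum.distrib)
  also have "\<dots> = 2 * (\<Sum>e\<in>Ed n. T1 n w \<phi> e)" unfolding T2_T1 by simp
  also have "\<dots> \<le> 2 * (2 * pi * real (card (Perms n)))"
  proof -
    have "(\<Sum>e\<in>Ed n. T1 n w \<phi> e) \<le> 2 * pi * real (card (Perms n))" by (rule T1_total) (rule norm1)
    then show ?thesis by simp
  qed
  finally show ?thesis by simp
qed


lemma qinner_init: "n > 0 \<Longrightarrow> qinner n w init_state init_state = 1"
proof -
  assume n: "n > 0"
  have m: "(0, 0, False, 0) \<in> basis_set n w" using n unfolding basis_set_def by simp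
  have "qinner n w init_state init_state = (\<Sum>x\<in>basis_set n w. if x = (0, 0, False, 0) then 1 else 0)"
    unfolding qinner_def init_state_def by (intro sum.cong refl) simp
  also have "\<dots> = 1" using m by simp
  finally show ?thesis .
qed

locale exalg =
  fixes n w T U Out E
  assumes alg: "exact_sorting_alg n w T U Out E" and n2: "n \<ge> 2"
begin

abbreviation st where "st k \<sigma> \<equiv> run_state n w U \<sigma> k"

lemma unit: "k \<le> T \<Longrightarrow> is_unitary n w (U k)" using alg unfolding exact_sorting_alg_def by blast
lemma povm: "is_povm n w Out E" using alg unfolding exact_sorting_alg_def by blast
lemma outp: "\<sigma> \<in> Perms n \<Longrightarrow> out_prob n w T U Out E \<sigma> \<sigma> = 1"
  using alg unfolding exact_sorting_alg_def Perms_def by blast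

lemma norm_st: "k \<le> T \<Longrightarrow> qinner n w (st k \<sigma>) (st k \<sigma>) = 1"
proof (induction k)
  case 0
  have "qinner n w (st 0 \<sigma>) (st 0 \<sigma>) = qinner n w init_state init_state"
    using qinner_unitary[OF unit[of 0]] by simp
  also have "\<dots> = 1" using n2 by (intro qinner_init) simp
  finally show ?case .
next
  case (Suc k)
  have "qinner n w (st (Suc k) \<sigma>) (st (Suc k) \<sigma>) = qinner n w (query_gate \<sigma> (st k \<sigma>)) (query_gate \<sigma> (st k \<sigma>))"
    using qinner_unitary[OF unit[OF Suc.prems]] by simp
  also have "\<dots> = 1" using Suc by (simp add: qinner_query_same)
  finally show ?case .
qed

lemma step_st: "Suc k \<le> T \<Longrightarrow> qinner n w (st (Suc k) \<sigma>) (st (Suc k) \<tau>) = qinner n w (query_gate \<sigma> (st k \<sigma>)) (query_gate \<tau> (st k \<tau>))"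
  using qinner_unitary[OF unit] by simp

lemma orth_st:
  assumes s: "\<sigma> \<in> Perms n" and t: "\<tau> \<in> Perms n" and ne: "\<sigma> \<noteq> \<tau>"
  shows "qinner n w (st T \<sigma>) (st T \<tau>) = 0"
proof -
  have o1: "out_prob n w T U Out E \<sigma> \<sigma> = 1" "out_prob n w T U Out E \<tau> \<tau> = 1" using outp s t by auto
  have in1: "\<sigma> \<in> Out" "\<tau> \<in> Out" using o1 unfolding out_prob_def by (auto split: if_splits)
  have q1: "Re (Qf n w (E \<sigma>) (st T \<sigma>)) = 1" "Re (Qf n w (E \<tau>) (st T \<tau>)) = 1"
    using o1 in1 unfolding out_prob_def by auto
  have n1: "qinner n w (st T \<sigma>) (st T \<sigma>) = 1" by (rule norm_st) simp
  have n2: "qinner n w (st T \<tau>) (st T \<tau>) = 1" by (rule norm_st) simp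
  show ?thesis
    by (rule povm_orth[where s=\<tau> and t=\<sigma> and \<psi>="st T \<tau>" and \<phi>="st T \<sigma>", OF povm in1(2) in1(1) ne[symmetric] n2 q1(2) n1 q1(1)])
qed

definition W where "W k = (\<Sum>e\<in>Ed n. complex_of_real (GamE e) * qinner n w (st k (srcE e)) (st k (dstE e)))"

lemma W0: "W 0 = complex_of_real (real (card (Perms n)) * hs n)"
proof -
  have a: "W 0 = (\<Sum>e\<in>Ed n. complex_of_real (GamE e))"
    unfolding W_def using norm_st[of 0] by simp
  have "(\<Sum>e\<in>Ed n. GamE e) = (\<Sum>\<sigma>\<in>Perms n. \<Sum>x\<in>rowE n \<sigma>. Gam \<sigma> (fst x) (snd x))"
    unfolding Ed_def GamE_def by (subst sum.Sigma) (auto simp: finite_Perms finite_row split_def)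
  also have "\<dots> = (\<Sum>\<sigma>\<in>Perms n. hs n)" by (rule sum.cong[OF refl]) (rule row_Gam)
  also have "\<dots> = real (card (Perms n)) * hs n" by simp
  finally have b: "(\<Sum>e\<in>Ed n. GamE e) = real (card (Perms n)) * hs n" .
  show ?thesis unfolding a b[symmetric] by (rule of_real_sum[symmetric])
qed

lemma WT: "W T = 0"
  unfolding W_def
proof (rule sum.neutral, rule ballI)
  fix e assume e: "e \<in> Ed n"
  have "srcE e \<noteq> dstE e" using e unfolding Ed_def srcE_def dstE_def rowE_def
    by (auto dest: dst_ne)
  then show "complex_of_real (GamE e) * qinner n w (st T (srcE e)) (st T (dstE e)) = 0"
    using orth_st[OF srcE_Perms[OF e] dstE_Perms[OF e]] by simp
qed

lemma W_step: assumes k: "Suc k \<le> T" shows "cmod (W (Suc k) - W k) \<le> 4 * pi * real (card (Perms n))"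
proof -
  define D where "D e = qinner n w (query_gate (srcE e) (st k (srcE e))) (query_gate (dstE e) (st k (dstE e)))
        - qinner n w (st k (srcE e)) (st k (dstE e))" for e
  have eq: "W (Suc k) - W k = (\<Sum>e\<in>Ed n. complex_of_real (GamE e) * D e)"
    unfolding W_def step_st[OF k] D_def by (simp only: sum_subtractf[symmetric] right_diff_distrib)
  have "cmod (W (Suc k) - W k) \<le> (\<Sum>e\<in>Ed n. cmod (complex_of_real (GamE e) * D e))"
    unfolding eq by (rule norm_sum)
  also have "\<dots> = (\<Sum>e\<in>Ed n. GamE e * cmod (D e))"
    by (intro sum.cong refl) (simp only: norm_mult norm_of_real abs_of_nonneg[OF GamE_nonneg])
  also have "\<dots> \<le> 4 * pi * real (card (Perms n))"
    unfolding D_def by (rule schur_total[where \<phi> = "\<lambda>\<sigma>. st k \<sigma>"]) (use norm_st k in simp)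
  finally show ?thesis .
qed

lemma W_total: "k \<le> T \<Longrightarrow> cmod (W 0 - W k) \<le> real k * (4 * pi * real (card (Perms n)))"
proof (induction k)
  case 0 then show ?case by simp
next
  case (Suc k)
  have "cmod (W 0 - W (Suc k)) \<le> cmod (W 0 - W k) + cmod (W (Suc k) - W k)"
    using norm_triangle_ineq[of "W 0 - W k" "W k - W (Suc k)"] by (simp add: norm_minus_commute)
  also have "\<dots> \<le> real k * (4 * pi * real (card (Perms n))) + 4 * pi * real (card (Perms n))"
    using Suc W_step[OF Suc.prems] by (intro add_mono) auto
  finally show ?case by (simp add: algebra_simps)
qed

lemma main_bound: "hs n \<le> 4 * pi * real T"
proof -
  have c: "real (card (Perms n)) > 0" using finite_Perms id_Perms card_gt_0_iff by fastforce
  have "cmod (W 0 - W T) \<le> real T * (4 * pi * real (card (Perms n)))" by (rule W_total) simp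
  moreover have "cmod (W 0 - W T) = real (card (Perms n)) * hs n"
  proof -
    have "hs n \<ge> 0" unfolding hs_def by (intro sum_nonneg) auto
    then show ?thesis unfolding WT W0 diff_zero norm_of_real using c by simp
  qed
  ultimately have "real (card (Perms n)) * hs n \<le> real (card (Perms n)) * (4 * pi * real T)"
    by (simp add: algebra_simps)
  then show ?thesis using c by simp
qed

lemma final: "real T \<ge> real n * ln (real n) / (2 * pi) - (1 - euler_mascheroni) / (2 * pi) * real n"
proof -
  have np: "n > 0" using n2 by simp
  have h: "2 * (real n * harm n - real n) \<le> 4 * pi * real T" using main_bound hs_formula by simp
  have g: "harm n \<ge> ln (real n) + euler_mascheroni" using harm_ge[OF np] by simp
  have "real n * (ln (real n) + euler_mascheroni) \<le> real n * harm n"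
    using g by (intro mult_left_mono) auto
  then have "real n * ln (real n) - (1 - euler_mascheroni) * real n \<le> 2 * pi * real T"
    using h by (simp add: algebra_simps)
  then have "(real n * ln (real n) - (1 - euler_mascheroni) * real n) / (2 * pi) \<le> real T"
    by (simp add: divide_le_eq mult.commute pi_gt_zero)
  moreover have "(real n * ln (real n) - (1 - euler_mascheroni) * real n) / (2 * pi)
     = real n * ln (real n) / (2 * pi) - (1 - euler_mascheroni) * real n / (2 * pi)"
    by (rule diff_divide_distrib)
  moreover have "(1 - euler_mascheroni) / (2 * pi) * real n = (1 - euler_mascheroni) * real n / (2 * pi)"
    by (rule times_divide_eq_left)
  ultimately show ?thesis by linarith
qed

end

theorem corollary1:
  shows "\<exists>C::real. \<forall>n\<ge>2. \<forall>w T U Out E.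
     exact_sorting_alg n w T U Out E \<longrightarrow>
       real T \<ge> real n * ln (real n) / (2 * pi)
                 - (1 - euler_mascheroni) / (2 * pi) * real n - C"
proof (intro exI[of _ 0] allI impI)
  fix n w T U Out E
  assume "2 \<le> n" "exact_sorting_alg n w T U Out E"
  then interpret exalg n w T U Out E by unfold_locales
  show "real T \<ge> real n * ln (real n) / (2 * pi) - (1 - euler_mascheroni) / (2 * pi) * real n - 0"
    using final by simp
qed


end
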